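(* The topology of any first countable paratopological group $G$ is generated by a left-invariant $\overline{\mathsf{dist}}$-continuous quasi-pseudometric; if moreover $G$ is semiregular, this quasi-pseudometric can additionally be chosen right-continuous.
   Context: A paratopological group is a group with a topology making multiplication continuous. Semiregular: every neighborhood $O_x$ of $x$ contains $\mathrm{int}\,\overline{U_x}$ for some neighborhood $U_x$ of $x$. A quasi-pseudometric is $d:G\times G\to[0,\infty)$ with $d(x,x)=0$ and the triangle inequality; left-invariant if $d(zx,zy)=d(x,y)$ for all $x,y,z$; right-continuous if $y\mapsto d(x,y)$ is continuous for each $x$; $\overline{\mathsf{dist}}$-continuous if for every non-empty $A\subset G$ the function $x\mapsto\inf\{\varepsilon>0:x\in\overline{B_d(A,\varepsilon)}\}$ is continuous, where $B_d(A,\varepsilon)=\{y:\exists a\in A\ d(a,y)<\varepsilon\}$. $d$ generates the topology if the balls $B_d(x,\varepsilon)=\{y:d(x,y)<\varepsilon\}$ form a subbase of it. *)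

theory Defs
  imports "HOL-Analysis.Analysis"
begin

text \<open>Groups are written additively via the (not necessarily commutative) type class
  group_add; the group carrier is the whole type and the topology T lives on UNIV.\<close>

definition paratopological_group :: "('a::group_add) topology \<Rightarrow> bool" where
  "paratopological_group T \<longleftrightarrow> topspace T = UNIV \<and>
     continuous_map (prod_topology T T) T (\<lambda>(x, y). x + y)"

definition semiregular :: "'a topology \<Rightarrow> bool" where
  "semiregular T \<longleftrightarrow> (\<forall>x W. openin T W \<and> x \<in> W \<longrightarrow>
     (\<exists>U. openin T U \<and> x \<in> U \<and> T interior_of (T closure_of U) \<subseteq> W))"

definition quasi_pseudometric :: "('a \<Rightarrow> 'a \<Rightarrow> real) \<Rightarrow> bool" where
  "quasi_pseudometric d \<longleftrightarrow> (\<forall>x y. 0 \<le> d x y) \<and> (\<forall>x. d x x = 0) \<and>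
     (\<forall>x y z. d x z \<le> d x y + d y z)"

definition left_invariant :: "('a::group_add \<Rightarrow> 'a \<Rightarrow> real) \<Rightarrow> bool" where
  "left_invariant d \<longleftrightarrow> (\<forall>x y z. d (z + x) (z + y) = d x y)"

definition right_continuous :: "'a topology \<Rightarrow> ('a \<Rightarrow> 'a \<Rightarrow> real) \<Rightarrow> bool" where
  "right_continuous T d \<longleftrightarrow> (\<forall>x. continuous_map T euclideanreal (\<lambda>y. d x y))"

definition qball :: "('a \<Rightarrow> 'a \<Rightarrow> real) \<Rightarrow> 'a \<Rightarrow> real \<Rightarrow> 'a set" where
  "qball d x e = {y. d x y < e}"

definition qball_set :: "('a \<Rightarrow> 'a \<Rightarrow> real) \<Rightarrow> 'a set \<Rightarrow> real \<Rightarrow> 'a set" where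
  "qball_set d A e = {y. \<exists>a\<in>A. d a y < e}"

definition closed_dist :: "'a topology \<Rightarrow> ('a \<Rightarrow> 'a \<Rightarrow> real) \<Rightarrow> 'a set \<Rightarrow> 'a \<Rightarrow> real" where
  "closed_dist T d A x = Inf {e. e > 0 \<and> x \<in> T closure_of (qball_set d A e)}"

definition closed_dist_continuous :: "'a topology \<Rightarrow> ('a \<Rightarrow> 'a \<Rightarrow> real) \<Rightarrow> bool" where
  "closed_dist_continuous T d \<longleftrightarrow>
     (\<forall>A. A \<noteq> {} \<longrightarrow> continuous_map T euclideanreal (closed_dist T d A))"

definition generates_topology :: "'a topology \<Rightarrow> ('a \<Rightarrow> 'a \<Rightarrow> real) \<Rightarrow> bool" where
  "generates_topology T d \<longleftrightarrow>
     T = topology_generated_by {qball d x e | x e. e > 0}"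

end

theory Submission
  imports Defs
begin

lemma pg_top: "paratopological_group T \<Longrightarrow> topspace T = UNIV"
  by (simp add: paratopological_group_def)

lemma pg_left: assumes "paratopological_group T" shows "continuous_map T T (\<lambda>y. c + y)"
proof -
  have "continuous_map T (prod_topology T T) (\<lambda>y. (c, y))"
    using assms by (intro continuous_map_pairedI) (auto simp: paratopological_group_def)
  from continuous_map_compose[OF this, of T "\<lambda>(x, y). x + y"] assms show ?thesis
    by (simp add: paratopological_group_def o_def)
qed

lemma pg_right: assumes "paratopological_group T" shows "continuous_map T T (\<lambda>y. y + c)"
proof -
  have "continuous_map T (prod_topology T T) (\<lambda>y. (y, c))"
    using assms by (intro continuous_map_pairedI) (auto simp: paratopological_group_def)
  from continuous_map_compose[OF this, of T "\<lambda>(x, y). x + y"] assms show ?thesis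
    by (simp add: paratopological_group_def o_def)
qed

lemma pg_open_pre: assumes "paratopological_group T" "openin T S"
  shows "openin T {y. c + y \<in> S}" "openin T {y. y + c \<in> S}"
proof -
  have "openin T {y \<in> topspace T. c + y \<in> S}"
    by (rule openin_continuous_map_preimage[OF pg_left[OF assms(1)] assms(2)])
  then show "openin T {y. c + y \<in> S}" using pg_top[OF assms(1)] by simp
  have "openin T {y \<in> topspace T. y + c \<in> S}"
    by (rule openin_continuous_map_preimage[OF pg_right[OF assms(1)] assms(2)])
  then show "openin T {y. y + c \<in> S}" using pg_top[OF assms(1)] by simp
qed

lemma pg_open_img: assumes "paratopological_group T" "openin T S"
  shows "openin T ((\<lambda>y. c + y) ` S)"
proof -
  have "(\<lambda>y. c + y) ` S = {y. -c + y \<in> S}"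
  proof (intro set_eqI iffI)
    fix z assume "z \<in> (\<lambda>y. c + y) ` S" then show "z \<in> {y. -c + y \<in> S}"
      by (auto simp: add.assoc[symmetric])
  next
    fix z assume "z \<in> {y. -c + y \<in> S}"
    then have "c + (-c + z) \<in> (\<lambda>y. c + y) ` S" by blast
    then show "z \<in> (\<lambda>y. c + y) ` S" by (simp add: add.assoc[symmetric])
  qed
  then show ?thesis using pg_open_pre[OF assms, of "-c"] by simp
qed

lemma qpm_ge0: "quasi_pseudometric d \<Longrightarrow> 0 \<le> d x y" by (simp add: quasi_pseudometric_def)
lemma qpm_refl: "quasi_pseudometric d \<Longrightarrow> d x x = 0" by (simp add: quasi_pseudometric_def)
lemma qpm_tri: "quasi_pseudometric d \<Longrightarrow> d x z \<le> d x y + d y z" by (simp add: quasi_pseudometric_def)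

lemma li_shift: assumes "left_invariant d" shows "d w (w + v) = d x (x + v)"
proof -
  have "d (w + 0) (w + v) = d 0 v" using assms unfolding left_invariant_def by blast
  moreover have "d (x + 0) (x + v) = d 0 v" using assms unfolding left_invariant_def by blast
  ultimately show ?thesis by (simp only: add_0_right)
qed

lemma clD: "x \<in> X closure_of S \<Longrightarrow> x \<in> U \<Longrightarrow> openin X U \<Longrightarrow> \<exists>y\<in>S. y \<in> U"
  unfolding in_closure_of by blast

lemma clI: "x \<in> topspace X \<Longrightarrow> (\<And>U. x \<in> U \<Longrightarrow> openin X U \<Longrightarrow> \<exists>y\<in>S. y \<in> U) \<Longrightarrow> x \<in> X closure_of S"
  unfolding in_closure_of by blast

lemma key_K:
  assumes pg: "paratopological_group T" and q: "quasi_pseudometric d" and li: "left_invariant d"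
    and x: "x \<in> T closure_of (qball_set d A e)" and dxy: "d x y < \<delta>"
  shows "y \<in> T closure_of (qball_set d A (e + \<delta>))"
proof (rule clI)
  show "y \<in> topspace T" using pg_top[OF pg] by simp
  fix V assume O1: "y \<in> V" and O2: "openin T V"
  have O: "y \<in> V \<and> openin T V" using O1 O2 by simp
  define v where "v = -x + y"
  have xv: "x + v = y" unfolding v_def by (simp add: add_minus_cancel)
  have W: "openin T {w. w + v \<in> V}" using pg_open_pre(2)[OF pg] O by blast
  have "x \<in> {w. w + v \<in> V}" using xv O by simp
  have "\<exists>w\<in>qball_set d A e. w \<in> {w. w + v \<in> V}"
    by (rule clD[OF x \<open>x \<in> {w. w + v \<in> V}\<close> W])
  then obtain w where w: "w \<in> qball_set d A e" "w + v \<in> V" by blast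
  then obtain a where a: "a \<in> A" "d a w < e" by (auto simp: qball_set_def)
  have "d a (w + v) \<le> d a w + d w (w + v)" by (rule qpm_tri[OF q])
  also have "d w (w + v) = d x y" using li_shift[OF li, of w v x] xv by simp
  finally have "d a (w + v) < e + \<delta>" using a dxy by simp
  then show "\<exists>z\<in>qball_set d A (e + \<delta>). z \<in> V" using a w by (auto simp: qball_set_def)
qed


lemma cd_ne: assumes "topspace T = UNIV" "quasi_pseudometric d" "a \<in> A"
  shows "d a x + 1 \<in> {e. e > 0 \<and> x \<in> T closure_of (qball_set d A e)}"
proof -
  have "x \<in> qball_set d A (d a x + 1)" using assms unfolding qball_set_def
    by (simp, intro bexI[of _ a]) auto
  then have "x \<in> T closure_of (qball_set d A (d a x + 1))"
    using closure_of_subset[of "qball_set d A (d a x + 1)" T] assms by auto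
  moreover have "d a x + 1 > 0" using qpm_ge0[OF assms(2)] by (smt (verit))
  ultimately show ?thesis by simp
qed

lemma cd_bdd: "bdd_below {e::real. e > 0 \<and> P e}"
  by (rule bdd_belowI[of _ 0]) auto

lemma cd_mono: "e \<le> e' \<Longrightarrow> x \<in> T closure_of (qball_set d A e) \<Longrightarrow> x \<in> T closure_of (qball_set d A e')"
proof -
  assume "e \<le> e'" "x \<in> T closure_of (qball_set d A e)"
  moreover have "qball_set d A e \<subseteq> qball_set d A e'" using \<open>e \<le> e'\<close> unfolding qball_set_def
    by (auto intro: less_le_trans)
  ultimately show ?thesis using closure_of_mono by blast
qed

lemma cd_ge0: assumes "topspace T = UNIV" "quasi_pseudometric d" "A \<noteq> {}"
  shows "0 \<le> closed_dist T d A x"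
proof -
  obtain a where "a \<in> A" using assms by blast
  from cd_ne[OF assms(1,2) this] show ?thesis unfolding closed_dist_def
    by (intro cInf_greatest) auto
qed

lemma cd_le: "topspace T = UNIV \<Longrightarrow> quasi_pseudometric d \<Longrightarrow> e > 0 \<Longrightarrow> x \<in> T closure_of (qball_set d A e) \<Longrightarrow> closed_dist T d A x \<le> e"
  unfolding closed_dist_def by (rule cInf_lower) (auto intro: cd_bdd)

lemma cd_lt: assumes "topspace T = UNIV" "quasi_pseudometric d" "A \<noteq> {}" "closed_dist T d A x < c"
  shows "\<exists>e. e > 0 \<and> e < c \<and> x \<in> T closure_of (qball_set d A e)"
proof -
  obtain a where "a \<in> A" using assms by blast
  from cd_ne[OF assms(1,2) this] have ne: "{e. e > 0 \<and> x \<in> T closure_of (qball_set d A e)} \<noteq> {}" by blast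
  from assms(4) show ?thesis unfolding closed_dist_def cInf_less_iff[OF ne cd_bdd] by auto
qed

lemma cd_gt: assumes "topspace T = UNIV" "quasi_pseudometric d" "A \<noteq> {}"
  and "\<And>e. 0 < e \<Longrightarrow> e \<le> c \<Longrightarrow> x \<notin> T closure_of (qball_set d A e)"
  shows "c \<le> closed_dist T d A x"
proof -
  obtain a where "a \<in> A" using assms by blast
  from cd_ne[OF assms(1,2) this] have ne: "{e. e > 0 \<and> x \<in> T closure_of (qball_set d A e)} \<noteq> {}" by blast
  show ?thesis unfolding closed_dist_def
  proof (rule cInf_greatest[OF ne])
    fix e assume "e \<in> {e. e > 0 \<and> x \<in> T closure_of (qball_set d A e)}"
    then show "c \<le> e" using assms(4)[of e] by force
  qed
qed

lemma GEN:
  assumes pg: "paratopological_group T" and q: "quasi_pseudometric d" and li: "left_invariant d"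
    and balls: "\<And>x e. openin T (qball d x e)"
  shows "closed_dist_continuous T d"
  unfolding closed_dist_continuous_def
proof (intro allI impI)
  fix A :: "'a set" assume A: "A \<noteq> {}"
  have top: "topspace T = UNIV" using pg_top[OF pg] .
  let ?f = "closed_dist T d A"
  show "continuous_map T euclideanreal ?f"
    unfolding continuous_map_upper_lower_semicontinuous_lt top
  proof (intro conjI allI)
    fix c :: real
    show "openin T {x \<in> UNIV. ?f x > c}"
    proof (subst openin_subopen, intro ballI)
      fix x assume "x \<in> {x \<in> UNIV. ?f x > c}"
      then have fx: "?f x > c" by simp
      show "\<exists>U. openin T U \<and> x \<in> U \<and> U \<subseteq> {x \<in> UNIV. ?f x > c}"
      proof (cases "c < 0")
        case True
        have "openin T UNIV" using openin_topspace[of T] top by simp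
        moreover have "\<And>y. ?f y > c" using cd_ge0[OF top q A] True by (smt (verit))
        ultimately show ?thesis by blast
      next
        case False
        define \<epsilon> where "\<epsilon> = (c + ?f x) / 2"
        have e1: "c < \<epsilon>" "\<epsilon> < ?f x" using fx unfolding \<epsilon>_def by auto
        have epos: "\<epsilon> > 0" using False e1 by linarith
        have "x \<notin> T closure_of (qball_set d A \<epsilon>)"
          using cd_le[OF top q epos, of x A] e1 by auto
        then have "\<not> (\<forall>U. x \<in> U \<and> openin T U \<longrightarrow> (\<exists>y. y \<in> qball_set d A \<epsilon> \<and> y \<in> U))"
          using top unfolding in_closure_of by simp
        then obtain U where U: "openin T U" "x \<in> U" "\<forall>y\<in>qball_set d A \<epsilon>. y \<notin> U"
          by blast
        have "U \<subseteq> {x \<in> UNIV. ?f x > c}"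
        proof
          fix y assume "y \<in> U"
          have "\<epsilon> \<le> ?f y"
          proof (rule cd_gt[OF top q A])
            fix e assume "0 < e" "e \<le> \<epsilon>"
            show "y \<notin> T closure_of (qball_set d A e)"
            proof
              assume "y \<in> T closure_of (qball_set d A e)"
              then have "y \<in> T closure_of (qball_set d A \<epsilon>)" by (rule cd_mono[OF \<open>e \<le> \<epsilon>\<close>])
              from clD[OF this \<open>y \<in> U\<close> U(1)] U(3) show False by blast
            qed
          qed
          then show "y \<in> {x \<in> UNIV. ?f x > c}" using e1 by simp
        qed
        then show ?thesis using U by blast
      qed
    qed
    show "openin T {x \<in> UNIV. ?f x < c}"
    proof (subst openin_subopen, intro ballI)
      fix x assume "x \<in> {x \<in> UNIV. ?f x < c}"
      then obtain e where e: "e > 0" "e < c" "x \<in> T closure_of (qball_set d A e)"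
        using cd_lt[OF top q A] by auto
      define \<delta> where "\<delta> = (c - e) / 2"
      have dpos: "\<delta> > 0" "e + \<delta> < c" using e unfolding \<delta>_def by (auto simp: field_simps)
      have "qball d x \<delta> \<subseteq> {x \<in> UNIV. ?f x < c}"
      proof
        fix y assume "y \<in> qball d x \<delta>"
        then have "d x y < \<delta>" by (simp add: qball_def)
        from key_K[OF pg q li e(3) this] have "?f y \<le> e + \<delta>"
          using cd_le[OF top q] e dpos by (smt (verit))
        then show "y \<in> {x \<in> UNIV. ?f x < c}" using dpos by simp
      qed
      moreover have "x \<in> qball d x \<delta>" using dpos qpm_refl[OF q] by (simp add: qball_def)
      ultimately show "\<exists>U. openin T U \<and> x \<in> U \<and> U \<subseteq> {x \<in> UNIV. ?f x < c}"
        using balls by blast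
    qed
  qed
qed


lemma GENT:
  assumes top: "topspace T = UNIV" and q: "quasi_pseudometric d"
    and balls: "\<And>x e. openin T (qball d x e)"
    and nb: "\<And>W x. openin T W \<Longrightarrow> x \<in> W \<Longrightarrow> \<exists>e>0. qball d x e \<subseteq> W"
  shows "generates_topology T d"
  unfolding generates_topology_def topology_eq openin_topology_generated_by_iff
proof (intro allI iffI)
  let ?B = "{qball d x e | x e. e > 0}"
  fix s assume s: "openin T s"
  have "s = \<Union>{b \<in> ?B. b \<subseteq> s}"
  proof (intro set_eqI iffI)
    fix x assume "x \<in> s"
    then obtain e where e: "e > 0" "qball d x e \<subseteq> s" using nb[OF s] by blast
    have "x \<in> qball d x e" using e qpm_refl[OF q] by (simp add: qball_def)
    then show "x \<in> \<Union>{b \<in> ?B. b \<subseteq> s}" using e by blast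
  qed blast
  moreover have "generate_topology_on ?B (\<Union>{b \<in> ?B. b \<subseteq> s})"
    by (rule generate_topology_on.UN) (auto intro: generate_topology_on.Basis)
  ultimately show "generate_topology_on ?B s" by simp
next
  let ?B = "{qball d x e | x e. e > 0}"
  fix s assume "generate_topology_on ?B s"
  then show "openin T s"
  proof (induction rule: generate_topology_on.induct)
    case (UN K) then show ?case by (intro openin_Union) auto
  qed (auto intro: balls)
qed

lemma qball_set_single: "qball_set d {x} e = qball d x e"
  by (simp add: qball_set_def qball_def)

lemma TR: assumes pg: "paratopological_group T" and y: "y \<in> T closure_of P"
  shows "z + y \<in> T closure_of ((\<lambda>p. z + p) ` P)"
proof (rule clI)
  show "z + y \<in> topspace T" using pg_top[OF pg] by simp
  fix U assume U: "z + y \<in> U" "openin T U"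
  have "\<exists>p\<in>P. p \<in> {w. z + w \<in> U}"
    by (rule clD[OF y]) (use U pg_open_pre(1)[OF pg U(2)] in auto)
  then show "\<exists>w\<in>(\<lambda>p. z + p) ` P. w \<in> U" by blast
qed

lemma QI: assumes li: "left_invariant d"
  shows "qball d (z + x) e = (\<lambda>p. z + p) ` qball d x e"
proof (intro set_eqI iffI)
  fix w assume "w \<in> qball d (z + x) e"
  have eq: "d (z + x) (z + (-z + w)) = d x (-z + w)" using li unfolding left_invariant_def by blast
  have zw: "z + (-z + w) = w" by (simp add: add.assoc[symmetric])
  have "d x (-z + w) < e" using eq zw \<open>w \<in> qball d (z + x) e\<close> by (simp add: qball_def)
  then have "-z + w \<in> qball d x e" by (simp add: qball_def)
  then have "z + (-z + w) \<in> (\<lambda>p. z + p) ` qball d x e" by (rule imageI)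
  then show "w \<in> (\<lambda>p. z + p) ` qball d x e" by (simp only: zw)
next
  fix w assume "w \<in> (\<lambda>p. z + p) ` qball d x e"
  then obtain p where "w = z + p" "d x p < e" by (auto simp: qball_def)
  then show "w \<in> qball d (z + x) e" using li unfolding left_invariant_def by (simp add: qball_def)
qed

lemma cl_shift: assumes pg: "paratopological_group T" and li: "left_invariant d"
  shows "z + y \<in> T closure_of (qball d (z + x) e) \<longleftrightarrow> y \<in> T closure_of (qball d x e)"
proof
  assume "z + y \<in> T closure_of (qball d (z + x) e)"
  from TR[OF pg this, of "-z"] show "y \<in> T closure_of (qball d x e)"
    unfolding QI[OF li, symmetric] by (simp add: add.assoc[symmetric])
next
  assume "y \<in> T closure_of (qball d x e)"
  from TR[OF pg this, of z] show "z + y \<in> T closure_of (qball d (z + x) e)"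
    unfolding QI[OF li, symmetric] .
qed


lemma SEMI:
  assumes pg: "paratopological_group T" and q: "quasi_pseudometric d" and li: "left_invariant d"
    and balls: "\<And>x e. openin T (qball d x e)"
    and nb: "\<And>W x. openin T W \<Longrightarrow> x \<in> W \<Longrightarrow> \<exists>e>0. qball d x e \<subseteq> W"
    and sr: "semiregular T"
  shows "\<exists>d. quasi_pseudometric d \<and> left_invariant d \<and> closed_dist_continuous T d
              \<and> right_continuous T d \<and> generates_topology T d"
proof -
  have top: "topspace T = UNIV" using pg_top[OF pg] .
  define d' where "d' x y = closed_dist T d {x} y" for x y
  have ne: "{x} \<noteq> {}" for x :: 'a by simp
  have S_def: "d' x y = Inf {e. e > 0 \<and> y \<in> T closure_of (qball d x e)}" for x y
    unfolding d'_def closed_dist_def qball_set_single ..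
  have ge0: "0 \<le> d' x y" for x y unfolding d'_def by (rule cd_ge0[OF top q ne])
  have le: "d' x y \<le> e" if "e > 0" "y \<in> T closure_of (qball d x e)" for x y e
    unfolding d'_def by (rule cd_le[OF top q that(1)]) (simp add: qball_set_single that(2))
  have lt: "\<exists>e. e > 0 \<and> e < c \<and> y \<in> T closure_of (qball d x e)" if "d' x y < c" for x y c
    using cd_lt[OF top q ne, of x y c] that unfolding d'_def qball_set_single by blast
  have refl: "d' x x = 0" for x
  proof (rule ccontr)
    assume "d' x x \<noteq> 0"
    then have pos: "d' x x > 0" using ge0[of x x] by simp
    have "x \<in> qball d x (d' x x / 2)" using pos qpm_refl[OF q] by (simp add: qball_def)
    then have "x \<in> T closure_of (qball d x (d' x x / 2))"
      using closure_of_subset[of "qball d x (d' x x / 2)" T] top by auto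
    from le[OF _ this] pos show False by simp
  qed
  have tri_cl: "z \<in> T closure_of (qball d x (a + b))"
    if "y \<in> T closure_of (qball d x a)" "z \<in> T closure_of (qball d y b)" for x y z a b
  proof -
    have "qball d y b \<subseteq> T closure_of (qball d x (a + b))"
    proof
      fix w assume "w \<in> qball d y b"
      then have "d y w < b" by (simp add: qball_def)
      from key_K[OF pg q li _ this, of "{x}" a] that(1) show "w \<in> T closure_of (qball d x (a + b))"
        by (simp add: qball_set_single)
    qed
    then have "T closure_of (qball d y b) \<subseteq> T closure_of (qball d x (a + b))"
      by (rule closure_of_minimal) simp
    then show ?thesis using that(2) by blast
  qed
  have tri: "d' x z \<le> d' x y + d' y z" for x y z
  proof -
    let ?S1 = "{e. e > 0 \<and> y \<in> T closure_of (qball d x e)}"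
    let ?S2 = "{e. e > 0 \<and> z \<in> T closure_of (qball d y e)}"
    have ne1: "?S1 \<noteq> {}" using cd_ne[OF top q, where a=x and A="{x}" and x=y] unfolding qball_set_single by blast
    have ne2: "?S2 \<noteq> {}" using cd_ne[OF top q, where a=y and A="{y}" and x=z] unfolding qball_set_single by blast
    have main: "d' x z \<le> a + b" if "a \<in> ?S1" "b \<in> ?S2" for a b
      using that tri_cl[of y x a z b] le[of "a + b" z x] by simp
    have "d' x z - b \<le> d' x y" if "b \<in> ?S2" for b
      unfolding S_def[of x y] by (rule cInf_greatest[OF ne1]) (use main that in force)
    then have "d' x z - d' x y \<le> d' y z"
      unfolding S_def[of y z] by (intro cInf_greatest[OF ne2]) force
    then show ?thesis by simp
  qed
  have qd': "quasi_pseudometric d'"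
    unfolding quasi_pseudometric_def using ge0 refl tri by blast
  have lid': "left_invariant d'"
    unfolding left_invariant_def S_def cl_shift[OF pg li] by simp
  have cdc: "closed_dist_continuous T d" by (rule GEN[OF pg q li balls])
  have rc: "right_continuous T d'"
    unfolding right_continuous_def d'_def using cdc unfolding closed_dist_continuous_def by blast
  have balls': "openin T (qball d' x e)" for x e
  proof -
    have "continuous_map T euclideanreal (d' x)" using rc unfolding right_continuous_def by blast
    then have "openin T {y \<in> topspace T. d' x y < e}"
      unfolding continuous_map_upper_lower_semicontinuous_lt by blast
    then show ?thesis using top by (simp add: qball_def)
  qed
  have nb': "\<exists>e>0. qball d' x e \<subseteq> W" if W: "openin T W" "x \<in> W" for W x
  proof -
    obtain U where U: "openin T U" "x \<in> U" "T interior_of (T closure_of U) \<subseteq> W"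
      using sr W unfolding semiregular_def by blast
    obtain e where e: "e > 0" "qball d x e \<subseteq> U" using nb[OF U(1,2)] by blast
    have "qball d' x e \<subseteq> T closure_of U"
    proof
      fix y assume "y \<in> qball d' x e"
      then obtain e' where e': "e' > 0" "e' < e" "y \<in> T closure_of (qball d x e')"
        using lt[of x y e] by (auto simp: qball_def)
      have "qball d x e' \<subseteq> U" using e e' by (auto simp: qball_def)
      then show "y \<in> T closure_of U" using e'(3) closure_of_mono by blast
    qed
    then have "qball d' x e \<subseteq> T interior_of (T closure_of U)"
      by (rule interior_of_maximal) (rule balls')
    then show ?thesis using U e by blast
  qed
  have "closed_dist_continuous T d'" by (rule GEN[OF pg qd' lid' balls'])
  moreover have "generates_topology T d'" by (rule GENT[OF top qd' balls' nb'])
  ultimately show ?thesis using qd' lid' rc by blast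
qed


lemma nb2: assumes pg: "paratopological_group T" and W: "openin T W" "0 \<in> W"
  shows "\<exists>V. openin T V \<and> 0 \<in> V \<and> (\<forall>a\<in>V. \<forall>b\<in>V. a + b \<in> W)"
proof -
  have "openin (prod_topology T T) {p \<in> topspace (prod_topology T T). (\<lambda>(x, y). x + y) p \<in> W}"
    by (rule openin_continuous_map_preimage[OF conjunct2[OF pg[unfolded paratopological_group_def]] W(1)])
  then have op: "openin (prod_topology T T) {p. fst p + snd p \<in> W}"
    using pg_top[OF pg] by (simp add: case_prod_beta)
  have z: "(0, 0) \<in> {p. fst p + snd p \<in> W}" using W by simp
  obtain U V where UV: "openin T U" "openin T V" "0 \<in> U" "0 \<in> V" "U \<times> V \<subseteq> {p. fst p + snd p \<in> W}"
    using op[unfolded openin_prod_topology_alt, rule_format, OF z] by blast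
  show ?thesis
  proof (intro exI[of _ "U \<inter> V"] conjI ballI)
    show "openin T (U \<inter> V)" using UV by (simp add: openin_Int)
    show "0 \<in> U \<inter> V" using UV by simp
    fix a b assume "a \<in> U \<inter> V" "b \<in> U \<inter> V"
    then have "(a, b) \<in> U \<times> V" by simp
    then show "a + b \<in> W" using UV(5) by auto
  qed
qed

lemma nb3: assumes pg: "paratopological_group T" and W: "openin T W" "0 \<in> W"
  shows "\<exists>V. openin T V \<and> 0 \<in> V \<and> V \<subseteq> W \<and> (\<forall>a\<in>V. \<forall>b\<in>V. \<forall>c\<in>V. a + (b + c) \<in> W)"
proof -
  obtain V1 where V1: "openin T V1" "0 \<in> V1" "\<forall>a\<in>V1. \<forall>b\<in>V1. a + b \<in> W" using nb2[OF pg W] by blast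
  obtain V2 where V2: "openin T V2" "0 \<in> V2" "\<forall>a\<in>V2. \<forall>b\<in>V2. a + b \<in> V1" using nb2[OF pg V1(1,2)] by blast
  have s21: "V2 \<subseteq> V1"
  proof
    fix a assume "a \<in> V2" then have "a + 0 \<in> V1" using V2 by blast
    then show "a \<in> V1" by simp
  qed
  have s1: "V1 \<subseteq> W"
  proof
    fix a assume "a \<in> V1" then have "a + 0 \<in> W" using V1 by blast
    then show "a \<in> W" by simp
  qed
  show ?thesis
  proof (intro exI[of _ V2] conjI ballI)
    show "openin T V2" "0 \<in> V2" by (fact V2(1), fact V2(2))
    show "V2 \<subseteq> W" using s21 s1 by blast
    fix a b c assume abc: "a \<in> V2" "b \<in> V2" "c \<in> V2"
    then have "b + c \<in> V1" using V2(3) by blast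
    moreover have "a \<in> V1" using abc s21 by blast
    ultimately show "a + (b + c) \<in> W" using V1(3) by blast
  qed
qed

lemma seqU:
  assumes pg: "paratopological_group T" and fc: "first_countable T"
  shows "\<exists>U::nat \<Rightarrow> 'a::group_add set. (\<forall>n. openin T (U n) \<and> 0 \<in> U n) \<and>
     (\<forall>n. \<forall>a\<in>U (Suc n). \<forall>b'\<in>U (Suc n). \<forall>c\<in>U (Suc n). a + (b' + c) \<in> U n) \<and>
     (\<forall>n. U (Suc n) \<subseteq> U n) \<and>
     (\<forall>W. openin T W \<and> 0 \<in> W \<longrightarrow> (\<exists>n. U n \<subseteq> W))"
proof -
  have top: "topspace T = UNIV" using pg_top[OF pg] .
  have "0 \<in> topspace T" using top by simp
  from fc[unfolded first_countable_def, rule_format, OF this]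
  obtain B where B: "countable B" "\<forall>V\<in>B. openin T V"
      "\<forall>U. openin T U \<and> 0 \<in> U \<longrightarrow> (\<exists>V\<in>B. 0 \<in> V \<and> V \<subseteq> U)"
    by (elim exE conjE)
  define B' where "B' = {V\<in>B. 0 \<in> V}"
  have cB': "countable B'" using B(1) unfolding B'_def by simp
  have "openin T UNIV" using openin_topspace[of T] top by simp
  then have "\<exists>V\<in>B. 0 \<in> V \<and> V \<subseteq> UNIV" using B(3)[rule_format, of UNIV] by simp
  then obtain V0 where "V0 \<in> B" "0 \<in> V0" by blast
  then have neB': "B' \<noteq> {}" unfolding B'_def by blast
  define b where "b = from_nat_into B'"
  have bB: "b n \<in> B'" for n unfolding b_def using from_nat_into[OF neB'] .
  have bW: "\<exists>n. b n \<subseteq> W" if hW: "openin T W" "0 \<in> W" for W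
  proof -
    obtain V where V: "V \<in> B" "0 \<in> V" "V \<subseteq> W" using B(3)[rule_format, OF conjI[OF hW]] by blast
    then have "V \<in> B'" unfolding B'_def by simp
    then have "V \<in> range b" using range_from_nat_into[OF neB' cB'] unfolding b_def by simp
    then obtain n where "V = b n" by (rule rangeE)
    then show ?thesis using V(3) by (intro exI[of _ n]) simp
  qed
  let ?P = "\<lambda>(n::nat) V. openin T V \<and> (0::'a) \<in> V"
  let ?Q = "\<lambda>n V V'. V' \<subseteq> b n \<and> (\<forall>a\<in>V'. \<forall>b'\<in>V'. \<forall>c\<in>V'. a + (b' + c) \<in> V)"
  have "\<exists>f. \<forall>n. ?P n (f n) \<and> ?Q n (f n) (f (Suc n))"
  proof (rule dependent_nat_choice)
    show "\<exists>x. ?P 0 x" using \<open>openin T UNIV\<close> by blast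
  next
    fix V n assume "?P n V"
    then have V: "openin T V" "0 \<in> V" by auto
    have bn: "openin T (b n)" "0 \<in> b n" using bB[of n] B(2) unfolding B'_def by auto
    have "openin T (V \<inter> b n)" "0 \<in> V \<inter> b n" using V bn by (auto simp: openin_Int)
    from nb3[OF pg this] obtain V' where V': "openin T V'" "0 \<in> V'" "V' \<subseteq> V \<inter> b n"
        "\<forall>a\<in>V'. \<forall>b'\<in>V'. \<forall>c\<in>V'. a + (b' + c) \<in> V \<inter> b n" by blast
    show "\<exists>y. ?P (Suc n) y \<and> ?Q n V y"
      by (rule exI[of _ V']) (use V' in blast)
  qed
  then obtain U where U0: "\<forall>n. ?P n (U n) \<and> ?Q n (U n) (U (Suc n))" by (elim exE)
  have U1: "openin T (U n) \<and> 0 \<in> U n" for n using U0 by simp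
  have U2: "U (Suc n) \<subseteq> b n \<and> (\<forall>a\<in>U (Suc n). \<forall>b'\<in>U (Suc n). \<forall>c\<in>U (Suc n). a + (b' + c) \<in> U n)" for n
    using U0 by simp
  note U = U1 U2
  have sub: "U (Suc n) \<subseteq> U n" for n
  proof
    fix a assume a: "a \<in> U (Suc n)"
    have "0 \<in> U (Suc n)" using U1 by simp
    then have "a + (0 + 0) \<in> U n" using conjunct2[OF U2[of n]] a by blast
    then show "a \<in> U n" by simp
  qed
  have h1: "\<forall>n. openin T (U n) \<and> 0 \<in> U n" using U(1) by blast
  have h2: "\<forall>n. \<forall>a\<in>U (Suc n). \<forall>b'\<in>U (Suc n). \<forall>c\<in>U (Suc n). a + (b' + c) \<in> U n"
    using U(2) by blast
  have h3: "\<forall>n. U (Suc n) \<subseteq> U n" using sub by blast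
  have h4: "\<forall>W. openin T W \<and> 0 \<in> W \<longrightarrow> (\<exists>n. U n \<subseteq> W)"
  proof (intro allI impI)
    fix W assume "openin T W \<and> 0 \<in> W"
    then obtain n where "b n \<subseteq> W" using bW by blast
    then show "\<exists>n. U n \<subseteq> W" using U(2)[of n] by blast
  qed
  show ?thesis using h1 h2 h3 h4 by blast
qed


context
  fixes U :: "nat \<Rightarrow> 'a::group_add set"
  assumes U0: "\<And>n. 0 \<in> U n"
    and U3h: "\<forall>n. \<forall>a\<in>U (Suc n). \<forall>b'\<in>U (Suc n). \<forall>c\<in>U (Suc n). a + (b' + c) \<in> U n"
    and Udec: "\<And>n. U (Suc n) \<subseteq> U n"
begin

lemma U3: "a \<in> U (Suc n) \<Longrightarrow> b \<in> U (Suc n) \<Longrightarrow> c \<in> U (Suc n) \<Longrightarrow> a + (b + c) \<in> U n"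
  using U3h by blast

definition rho :: "'a \<Rightarrow> real" where
  "rho g = Inf (insert 2 {(1/2::real)^m | m. g \<in> U m})"

lemma rho_bdd: "bdd_below (insert 2 {(1/2::real)^m | m. g \<in> U m})"
  by (rule bdd_belowI[of _ 0]) auto

lemma rho_ge0: "0 \<le> rho g"
  unfolding rho_def by (rule cInf_greatest) auto

lemma rho_le: "g \<in> U m \<Longrightarrow> rho g \<le> (1/2)^m"
  unfolding rho_def by (rule cInf_lower[OF _ rho_bdd]) auto

lemma Umono: "n \<le> m \<Longrightarrow> U m \<subseteq> U n"
  by (rule lift_Suc_antimono_le[of U]) (use Udec in auto)

lemma rho_lt: assumes "rho g < (1/2)^n" shows "g \<in> U (Suc n)"
proof -
  have "\<exists>y\<in>insert 2 {(1/2::real)^m | m. g \<in> U m}. y < (1/2)^n"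
    using assms unfolding rho_def cInf_less_iff[OF insert_not_empty rho_bdd] .
  then obtain y where y: "y \<in> insert 2 {(1/2::real)^m | m. g \<in> U m}" "y < (1/2)^n" by blast
  have "(1/2::real)^n \<le> 1" by (simp add: power_le_one)
  then have "y \<noteq> 2" using y(2) by auto
  then obtain m where m: "y = (1/2)^m" "g \<in> U m" using y(1) by blast
  have "n < m" using y(2) m(1) by (simp add: power_strict_decreasing_iff)
  then show ?thesis using Umono[of "Suc n" m] m(2) by auto
qed

lemma sumrho_nn: "0 \<le> sum_list (map rho xs)"
  by (rule sum_list_nonneg) (auto simp: rho_ge0)

lemma chain: "\<forall>n. sum_list (map rho gs) < (1/2)^n \<longrightarrow> sum_list gs \<in> U n"
proof (induction "length gs" arbitrary: gs rule: less_induct)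
  case less
  show ?case
  proof (intro allI impI)
    fix n assume S: "sum_list (map rho gs) < (1/2)^n"
    show "sum_list gs \<in> U n"
    proof (cases "gs = []")
      case True then show ?thesis using U0 by simp
    next
      case False
      define k where "k = length gs"
      define J where "J = {j. j < k \<and> sum_list (map rho (take j gs)) < (1/2)^(Suc n)}"
      have J0: "0 \<in> J" unfolding J_def k_def using False by simp
      have fJ: "finite J" unfolding J_def by simp
      define j where "j = Max J"
      have jJ: "j \<in> J" using Max_in[OF fJ] J0 unfolding j_def by blast
      have jmax: "\<And>i. i \<in> J \<Longrightarrow> i \<le> j" using Max_ge[OF fJ] unfolding j_def by blast
      have jk: "j < k" and Sp: "sum_list (map rho (take j gs)) < (1/2)^(Suc n)"
        using jJ unfolding J_def by auto
      define p where "p = take j gs"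
      define g where "g = gs ! j"
      define r where "r = drop (Suc j) gs"
      have gs_eq: "gs = p @ g # r" using id_take_nth_drop[of j gs] jk unfolding p_def g_def r_def k_def by simp
      have sum_eq: "sum_list gs = sum_list p + (g + sum_list r)" using gs_eq by simp
      have rsum: "sum_list (map rho gs) = sum_list (map rho p) + (rho g + sum_list (map rho r))"
        using gs_eq by simp
      have lp: "length p < length gs" using jk unfolding p_def k_def by simp
      have hp: "sum_list p \<in> U (Suc n)" using less(1)[OF lp] Sp unfolding p_def by blast
      have "rho g < (1/2)^n" using rsum S sumrho_nn[of p] sumrho_nn[of r] by linarith
      then have hg: "g \<in> U (Suc n)" by (rule rho_lt)
      have lr: "length r < length gs" unfolding r_def using False by simp
      have hr: "sum_list r \<in> U (Suc n)"
      proof (cases "Suc j < k")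
        case True
        then have "Suc j \<notin> J" using jmax by fastforce
        then have ge: "(1/2)^(Suc n) \<le> sum_list (map rho (take (Suc j) gs))"
          using True unfolding J_def by auto
        have "take (Suc j) gs = p @ [g]" unfolding p_def g_def
          by (rule take_Suc_conv_app_nth) (use jk k_def in simp)
        then have "sum_list (map rho (take (Suc j) gs)) = sum_list (map rho p) + rho g" by simp
        then have "sum_list (map rho r) < (1/2)^(Suc n)" using ge rsum S by simp
        then show ?thesis using less(1)[OF lr] by blast
      next
        case False
        then have "r = []" unfolding r_def k_def by simp
        then show ?thesis using U0 by simp
      qed
      show ?thesis unfolding sum_eq by (rule U3[OF hp hg hr])
    qed
  qed
qed

definition dd :: "'a \<Rightarrow> 'a \<Rightarrow> real" where
  "dd x y = Inf {sum_list (map rho gs) | gs. x + sum_list gs = y}"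

lemma dd_bdd: "bdd_below {sum_list (map rho gs) | gs. x + sum_list gs = y}"
  by (rule bdd_belowI[of _ 0]) (auto simp: sumrho_nn)

lemma dd_ne: "{sum_list (map rho gs) | gs. x + sum_list gs = y} \<noteq> {}"
proof -
  have "x + sum_list [-x + y] = y" by (simp add: add.assoc[symmetric])
  then show ?thesis by blast
qed

lemma dd_mem: "x + sum_list gs = y \<Longrightarrow> dd x y \<le> sum_list (map rho gs)"
  unfolding dd_def by (rule cInf_lower[OF _ dd_bdd]) blast

lemma dd_ge: "0 \<le> dd x y"
  unfolding dd_def by (rule cInf_greatest[OF dd_ne]) (auto simp: sumrho_nn)

lemma dd_lt: assumes "dd x y < c" shows "\<exists>gs. x + sum_list gs = y \<and> sum_list (map rho gs) < c"
  using assms unfolding dd_def cInf_less_iff[OF dd_ne dd_bdd] by blast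

lemma dd_refl: "dd x x = 0"
  using dd_mem[of x "[]" x] dd_ge[of x x] by simp

lemma dd_tri: "dd x z \<le> dd x y + dd y z"
proof -
  have "dd x z - sum_list (map rho gs2) \<le> dd x y" if g2: "y + sum_list gs2 = z" for gs2
    unfolding dd_def[of x y]
  proof (rule cInf_greatest[OF dd_ne])
    fix s assume "s \<in> {sum_list (map rho gs) | gs. x + sum_list gs = y}"
    then obtain gs1 where g1: "s = sum_list (map rho gs1)" "x + sum_list gs1 = y" by blast
    have "x + sum_list (gs1 @ gs2) = z" using g1 g2 by (simp add: add.assoc[symmetric])
    then have "dd x z \<le> sum_list (map rho (gs1 @ gs2))" by (rule dd_mem)
    then show "dd x z - sum_list (map rho gs2) \<le> s" using g1 by simp
  qed
  then have "dd x z - dd x y \<le> dd y z"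
    unfolding dd_def[of y z]
    by (intro cInf_greatest[OF dd_ne]) (smt (verit, best) mem_Collect_eq)
  then show ?thesis by simp
qed

lemma dd_li: "dd (z + x) (z + y) = dd x y"
proof -
  have "\<And>gs. (z + x + sum_list gs = z + y) \<longleftrightarrow> (x + sum_list gs = y)"
    by (simp add: add.assoc)
  then show ?thesis unfolding dd_def by simp
qed

lemma dd_rho: "dd x y \<le> rho (-x + y)"
  using dd_mem[of x "[-x + y]" y] by (simp add: add.assoc[symmetric])

lemma dd_small: assumes "dd x y < (1/2)^n" shows "-x + y \<in> U n"
proof -
  obtain gs where gs: "x + sum_list gs = y" "sum_list (map rho gs) < (1/2)^n"
    using dd_lt[OF assms] by blast
  have "sum_list gs \<in> U n" using chain gs(2) by blast
  moreover have "sum_list gs = -x + y" using gs(1) by (auto simp: add.assoc[symmetric])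
  ultimately show ?thesis by simp
qed

end


lemma CONS:
  assumes pg: "paratopological_group T" and fc: "first_countable T"
  shows "\<exists>d. quasi_pseudometric d \<and> left_invariant d \<and> (\<forall>x e. openin T (qball d x e)) \<and>
     (\<forall>W x. openin T W \<and> x \<in> W \<longrightarrow> (\<exists>e>0. qball d x e \<subseteq> W))"
proof -
  obtain U :: "nat \<Rightarrow> 'a set" where U: "\<forall>n. openin T (U n) \<and> 0 \<in> U n"
     "\<forall>n. \<forall>a\<in>U (Suc n). \<forall>b'\<in>U (Suc n). \<forall>c\<in>U (Suc n). a + (b' + c) \<in> U n"
     "\<forall>n. U (Suc n) \<subseteq> U n"
     "\<forall>W. openin T W \<and> 0 \<in> W \<longrightarrow> (\<exists>n. U n \<subseteq> W)"
    using seqU[OF pg fc] by (elim exE conjE) (rule that)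
  have U0: "\<And>n. 0 \<in> U n" using U(1) by simp
  have Uo: "\<And>n. openin T (U n)" using U(1) by simp
  have U3: "\<And>n a b c. a \<in> U (Suc n) \<Longrightarrow> b \<in> U (Suc n) \<Longrightarrow> c \<in> U (Suc n) \<Longrightarrow> a + (b + c) \<in> U n"
    using U(2) by blast
  have Udec: "\<And>n. U (Suc n) \<subseteq> U n" using U(3) by simp
  define d where "d = dd U"
  have q: "quasi_pseudometric d" unfolding quasi_pseudometric_def d_def
    using dd_ge[where U=U, OF U0 U(2) Udec] dd_refl[where U=U, OF U0 U(2) Udec] dd_tri[where U=U, OF U0 U(2) Udec] by blast
  have li: "left_invariant d" unfolding left_invariant_def d_def
    using dd_li[where U=U, OF U0 U(2) Udec] by blast
  have balls: "openin T (qball d x e)" for x e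
  proof (subst openin_subopen, intro ballI)
    fix y assume "y \<in> qball d x e"
    then have dxy: "d x y < e" by (simp add: qball_def)
    obtain n where n: "(1/2::real)^n < e - d x y" using real_arch_pow_inv[of "e - d x y" "1/2"] dxy by auto
    have "(\<lambda>u. y + u) ` U n \<subseteq> qball d x e"
    proof
      fix w assume "w \<in> (\<lambda>u. y + u) ` U n"
      then obtain u where u: "u \<in> U n" "w = y + u" by blast
      have "d x w \<le> d x y + d y w" by (rule qpm_tri[OF q])
      also have "d y w \<le> rho U (-y + w)" unfolding d_def by (rule dd_rho[where U=U, OF U0 U(2) Udec])
      also have "-y + w = u" using u(2) by (simp add: add.assoc[symmetric])
      also have "rho U u \<le> (1/2)^n" by (rule rho_le[where U=U, OF U0 U(2) Udec u(1)])
      finally have "d x w < e" using n by simp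
      then show "w \<in> qball d x e" by (simp add: qball_def)
    qed
    moreover have "y \<in> (\<lambda>u. y + u) ` U n" using U0[of n] by force
    moreover have "openin T ((\<lambda>u. y + u) ` U n)" by (rule pg_open_img[OF pg Uo])
    ultimately show "\<exists>V. openin T V \<and> y \<in> V \<and> V \<subseteq> qball d x e" by blast
  qed
  have nb: "\<exists>e>0. qball d x e \<subseteq> W" if W: "openin T W" "x \<in> W" for W x
  proof -
    let ?W = "(\<lambda>y. -x + y) ` W"
    have "openin T ?W" by (rule pg_open_img[OF pg W(1)])
    moreover have "0 \<in> ?W" using W(2) by force
    ultimately obtain n where n: "U n \<subseteq> ?W" using U(4) by blast
    have "qball d x ((1/2)^n) \<subseteq> W"
    proof
      fix y assume "y \<in> qball d x ((1/2)^n)"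
      then have "d x y < (1/2)^n" by (simp add: qball_def)
      then have "dd U x y < (1/2)^n" unfolding d_def .
      then have "-x + y \<in> U n" by (rule dd_small[where U=U, OF U0 U(2) Udec])
      then have "-x + y \<in> ?W" by (rule subsetD[OF n])
      then obtain w where w: "w \<in> W" "-x + y = -x + w" by (rule imageE)
      then have "y = w" by simp
      then show "y \<in> W" using w by simp
    qed
    then show ?thesis by (intro exI[of _ "(1/2)^n"]) simp
  qed
  have balls': "\<forall>x e. openin T (qball d x e)" using balls by simp
  have nb': "\<forall>W x. openin T W \<and> x \<in> W \<longrightarrow> (\<exists>e>0. qball d x e \<subseteq> W)"
    by (intro allI impI, elim conjE) (rule nb)
  show ?thesis
    by (intro exI[of _ d] conjI) (fact q, fact li, fact balls', fact nb')
qed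

theorem corollary7p6:
  fixes T :: "('a::group_add) topology"
  assumes "paratopological_group T" and "first_countable T"
  shows "(\<exists>d. quasi_pseudometric d \<and> left_invariant d \<and> closed_dist_continuous T d
              \<and> generates_topology T d)
       \<and> (semiregular T \<longrightarrow>
          (\<exists>d. quasi_pseudometric d \<and> left_invariant d \<and> closed_dist_continuous T d
              \<and> right_continuous T d \<and> generates_topology T d))"
proof -
  from CONS[OF assms] obtain d where d0: "quasi_pseudometric d \<and> left_invariant d \<and> (\<forall>x e. openin T (qball d x e)) \<and>
     (\<forall>W x. openin T W \<and> x \<in> W \<longrightarrow> (\<exists>e>0. qball d x e \<subseteq> W))" by (elim exE)
  have d1: "quasi_pseudometric d" using d0 by simp
  have d2: "left_invariant d" using d0 by simp
  have d3: "\<And>x e. openin T (qball d x e)" using d0 by simp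
  have d4: "\<And>W x. openin T W \<Longrightarrow> x \<in> W \<Longrightarrow> \<exists>e>0. qball d x e \<subseteq> W"
    using conjunct2[OF conjunct2[OF conjunct2[OF d0]]] by simp
  note d = d1 d2 d3 d4
  have top: "topspace T = UNIV" by (rule pg_top[OF assms(1)])
  have "closed_dist_continuous T d" by (rule GEN[OF assms(1) d(1,2,3)])
  moreover have "generates_topology T d" by (rule GENT[OF top d(1,3,4)])
  moreover have "semiregular T \<longrightarrow>
          (\<exists>d. quasi_pseudometric d \<and> left_invariant d \<and> closed_dist_continuous T d
              \<and> right_continuous T d \<and> generates_topology T d)"
    by (intro impI) (rule SEMI[OF assms(1) d])
  ultimately show ?thesis
  proof (intro conjI)
    show "\<exists>d. quasi_pseudometric d \<and> left_invariant d \<and> closed_dist_continuous T d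
              \<and> generates_topology T d"
      by (intro exI[of _ d] conjI) (fact d1, fact d2, fact, fact)
  qed
qed

end
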